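(* Let $f\colon M^n\to\mathbb{C}^{n+p}$ be a holomorphic isometric immersion of a Kähler manifold of real dimension $2n$, and let $J$ be the complex structure of $\mathbb{C}^{n+p}$. Let $f^N$ and $f^T$ be the normal and tangent components of the position vector $f$, and on the open set where $f^N\neq0$ let $F=f^N/\|f^N\|^2$. Let $\alpha_f^\perp$ denote the component of the second fundamental form $\alpha_f$ orthogonal to $\mathrm{span}\{f^N,Jf^N\}$. Then $F$ is anti-holomorphic, i.e. $F_*\circ J_M=-J\circ F_*$ ($J_M$ the complex structure of $M$), if and only if $\alpha_f^\perp(X,f^T)=0$ for all tangent vectors $X$. In particular, this always holds when $p=1$. *)

theory Defs
  imports "HOL-Analysis.Analysis"
begin

text \<open>Local (chart) model: M is an open set U of complex^'n (holomorphic coordinates),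
  f : U \<rightarrow> complex^'m holomorphic immersion, M carries the induced (Kaehler) metric.
  The real inner product on complex^'m is the Euclidean one of R^(2m).\<close>

definition cx_holomorphic :: "(complex^'n \<Rightarrow> complex^'m) \<Rightarrow> (complex^'n) set \<Rightarrow> bool" where
  "cx_holomorphic f U \<longleftrightarrow> (\<forall>x\<in>U. \<exists>L. (f has_derivative L) (at x) \<and>
        (\<forall>c v. L (c *s v) = c *s L v))"

definition cx_antiholomorphic :: "(complex^'n \<Rightarrow> complex^'m) \<Rightarrow> (complex^'n) set \<Rightarrow> bool" where
  "cx_antiholomorphic F W \<longleftrightarrow> (\<forall>x\<in>W. \<exists>L. (F has_derivative L) (at x) \<and>
        (\<forall>v. L (\<i> *s v) = - (\<i> *s L v)))"

definition cx_immersion :: "(complex^'n \<Rightarrow> complex^'m) \<Rightarrow> (complex^'n) set \<Rightarrow> bool" where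
  "cx_immersion f U \<longleftrightarrow> (\<forall>x\<in>U. f differentiable (at x) \<and> inj (frechet_derivative f (at x)))"

definition orth_proj :: "'a::real_inner set \<Rightarrow> 'a \<Rightarrow> 'a" where
  "orth_proj V w = (THE v. v \<in> V \<and> (\<forall>u\<in>V. inner (w - v) u = 0))"

definition tangent_space :: "(complex^'n \<Rightarrow> complex^'m) \<Rightarrow> complex^'n \<Rightarrow> (complex^'m) set" where
  "tangent_space f x = range (frechet_derivative f (at x))"

definition tan_part :: "(complex^'n \<Rightarrow> complex^'m) \<Rightarrow> complex^'n \<Rightarrow> complex^'m \<Rightarrow> complex^'m" where
  "tan_part f x w = orth_proj (tangent_space f x) w"

definition nor_part :: "(complex^'n \<Rightarrow> complex^'m) \<Rightarrow> complex^'n \<Rightarrow> complex^'m \<Rightarrow> complex^'m" where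
  "nor_part f x w = w - tan_part f x w"

definition fT :: "(complex^'n \<Rightarrow> complex^'m) \<Rightarrow> complex^'n \<Rightarrow> complex^'m" where
  "fT f x = tan_part f x (f x)"

definition fN :: "(complex^'n \<Rightarrow> complex^'m) \<Rightarrow> complex^'n \<Rightarrow> complex^'m" where
  "fN f x = nor_part f x (f x)"

definition FN :: "(complex^'n \<Rightarrow> complex^'m) \<Rightarrow> complex^'n \<Rightarrow> complex^'m" where
  "FN f x = (1 / (norm (fN f x))\<^sup>2) *\<^sub>R fN f x"

text \<open>Second fundamental form at x, in chart coordinates: alpha(df X, df Y) is the normal
  part of the second derivative D^2 f(x)(X,Y).\<close>
definition sff :: "(complex^'n \<Rightarrow> complex^'m) \<Rightarrow> complex^'n \<Rightarrow> complex^'n \<Rightarrow> complex^'n \<Rightarrow> complex^'m" where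
  "sff f x X Y = nor_part f x
      (frechet_derivative (\<lambda>y. frechet_derivative f (at y) Y) (at x) X)"

definition sff_perp :: "(complex^'n \<Rightarrow> complex^'m) \<Rightarrow> complex^'n \<Rightarrow> complex^'n \<Rightarrow> complex^'n \<Rightarrow> complex^'m" where
  "sff_perp f x X Y = sff f x X Y - orth_proj (span {fN f x, \<i> *s fN f x}) (sff f x X Y)"

end

theory Submission
  imports Defs
begin


lemma inner_i_left: "inner (\<i> *s (v::complex^'m)) w = - inner v (\<i> *s w)"
  by (simp add: inner_vec_def inner_complex_def sum_negf[symmetric] algebra_simps)

lemma inner_i_self: "inner (\<i> *s (v::complex^'m)) v = 0"
  using inner_i_left[of v v] by (simp add: inner_commute)

lemma inner_i_i: "inner (\<i> *s (v::complex^'m)) (\<i> *s w) = inner v w"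
  by (simp add: inner_vec_def inner_complex_def algebra_simps)

lemma i_i: "\<i> *s (\<i> *s (v::complex^'m)) = - v"
  by (simp add: vec_eq_iff)

lemma norm_i: "norm (\<i> *s (v::complex^'m)) = norm v"
  by (simp add: norm_eq_sqrt_inner inner_i_i)

lemma i_add: "\<i> *s ((v::complex^'m) + w) = \<i> *s v + \<i> *s w"
  by (simp add: vec_eq_iff algebra_simps)
lemma i_diff: "\<i> *s ((v::complex^'m) - w) = \<i> *s v - \<i> *s w"
  by (simp add: vec_eq_iff algebra_simps)
lemma i_neg: "\<i> *s (- (v::complex^'m)) = - (\<i> *s v)"
  by (simp add: vec_eq_iff algebra_simps)
lemma i_scaleR: "\<i> *s (a *\<^sub>R (v::complex^'m)) = a *\<^sub>R (\<i> *s v)"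
  by (simp add: vec_eq_iff algebra_simps scaleR_conv_of_real)
lemma i_zero: "\<i> *s (0::complex^'m) = 0"
  by (simp add: vec_eq_iff)
lemma i_eq_0: "\<i> *s (v::complex^'m) = 0 \<longleftrightarrow> v = 0"
  by (simp add: vec_eq_iff)

lemma bounded_linear_i: "bounded_linear (\<lambda>v::complex^'m. \<i> *s v)"
  by (rule bounded_linear_intro[where K=1]) (auto simp: i_add i_scaleR norm_i)

lemma orth_proj_works:
  fixes V :: "'a::euclidean_space set"
  assumes "subspace V"
  shows "orth_proj V w \<in> V \<and> (\<forall>u\<in>V. inner (w - orth_proj V w) u = 0)"
proof -
  obtain y z where y: "y \<in> span V" and z: "\<And>u. u \<in> span V \<Longrightarrow> orthogonal z u" and e: "w = y + z"
    using orthogonal_subspace_decomp_exists[of V w] by blast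
  have ex: "y \<in> V \<and> (\<forall>u\<in>V. inner (w - y) u = 0)"
    using y z e span_eq_iff[of V, THEN iffD2, OF assms] span_base by (auto simp: orthogonal_def)
  have "\<exists>!v. v \<in> V \<and> (\<forall>u\<in>V. inner (w - v) u = 0)"
  proof (rule ex1I[of _ y])
    show "y \<in> V \<and> (\<forall>u\<in>V. inner (w - y) u = 0)" by (rule ex)
  next
    fix v assume v: "v \<in> V \<and> (\<forall>u\<in>V. inner (w - v) u = 0)"
    have d: "y - v \<in> V" using v ex assms subspace_diff by blast
    have "inner (w - v) (y - v) - inner (w - y) (y - v) = 0" using v ex d by simp
    hence "inner (y - v) (y - v) = 0" by (simp add: inner_diff_left)
    thus "v = y" by simp
  qed
  thus ?thesis unfolding orth_proj_def by (rule theI')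
qed

lemma orth_proj_unique:
  fixes V :: "'a::euclidean_space set"
  assumes "subspace V" "v \<in> V" "\<forall>u\<in>V. inner (w - v) u = 0"
  shows "orth_proj V w = v"
proof -
  have p: "orth_proj V w \<in> V \<and> (\<forall>u\<in>V. inner (w - orth_proj V w) u = 0)"
    by (rule orth_proj_works[OF assms(1)])
  have d: "v - orth_proj V w \<in> V" using p assms subspace_diff by blast
  have "inner (w - orth_proj V w) (v - orth_proj V w) - inner (w - v) (v - orth_proj V w) = 0"
    using p assms d by simp
  hence "inner (v - orth_proj V w) (v - orth_proj V w) = 0" by (simp add: inner_diff_left)
  thus ?thesis by simp
qed



lemma chain_line:
  fixes g :: "'a::real_normed_vector \<Rightarrow> 'b::real_normed_vector"
  assumes "(g has_derivative D) (at (x + t *\<^sub>R A + B))"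
  shows "((\<lambda>t. g (x + t *\<^sub>R A + B)) has_derivative (\<lambda>s. D (s *\<^sub>R A))) (at t)"
proof -
  have i: "((\<lambda>t. x + t *\<^sub>R A + B) has_derivative (\<lambda>s. s *\<^sub>R A)) (at t)"
    by (auto intro!: derivative_eq_intros)
  show ?thesis using diff_chain_at[OF i assms] by (simp add: o_def)
qed

lemma sym_aux:
  fixes g :: "'a::real_normed_vector \<Rightarrow> 'b::real_inner"
  assumes U: "open U" "x \<in> U"
    and Dg: "\<And>y. y \<in> U \<Longrightarrow> (g has_derivative Dg y) (at y)"
    and H: "((\<lambda>y. Dg y A) has_derivative H) (at x)"
    and e: "e > 0"
  shows "\<exists>d>0. \<forall>h. 0 < h \<and> h < d \<longrightarrow>
     norm (g (x + h *\<^sub>R A + h *\<^sub>R B) - g (x + h *\<^sub>R A) - g (x + h *\<^sub>R B) + g x - (h*h) *\<^sub>R H B) \<le> e * (h*h)"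
proof -
  define C where "C = 2 * norm A + norm B + 1"
  have C: "C > 0" by (simp add: C_def add_nonneg_pos)
  obtain d0 where d0: "d0 > 0" "ball x d0 \<subseteq> U" using U open_contains_ball by blast
  have bl: "bounded_linear H" using H has_derivative_bounded_linear by blast
  obtain d1 where d1: "d1 > 0" "\<forall>y. norm (y - x) < d1 \<longrightarrow>
      norm (Dg y A - Dg x A - H (y - x)) \<le> (e / C) * norm (y - x)"
    using H[unfolded has_derivative_at_alt] e C by (meson divide_pos_pos)
  define d where "d = min d0 d1 / C"
  have d: "d > 0" using d0 d1 C by (simp add: d_def)
  show ?thesis
  proof (intro exI[of _ d] conjI allI impI d)
    fix h :: real assume h: "0 < h \<and> h < d"
    have hC: "h * C < min d0 d1" using h C by (simp add: d_def pos_less_divide_eq)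
    have nA: "norm (t *\<^sub>R A) \<le> h * norm A" if "t \<in> {0..h}" for t
      using that by (simp add: mult_right_mono)
    have nB: "norm (h *\<^sub>R B) \<le> h * norm B" using h by simp
    have inball1: "norm (t *\<^sub>R A + h *\<^sub>R B) < min d0 d1" if "t \<in> {0..h}" for t
    proof -
      have "norm (t *\<^sub>R A + h *\<^sub>R B) \<le> h * norm A + h * norm B"
        using norm_triangle_ineq[of "t *\<^sub>R A" "h *\<^sub>R B"] nA[OF that] nB by linarith
      also have "\<dots> \<le> h * C" using h by (simp add: C_def algebra_simps)
      finally show ?thesis using hC by linarith
    qed
    have inball2: "norm (t *\<^sub>R A) < min d0 d1" if "t \<in> {0..h}" for t
    proof -
      have "h * norm A \<le> h * C" using h unfolding C_def by (intro mult_left_mono) auto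
      hence "norm (t *\<^sub>R A) \<le> h * C" using nA[OF that] by linarith
      thus ?thesis using hC by linarith
    qed
    have inU: "x + t *\<^sub>R A + h *\<^sub>R B \<in> U" "x + t *\<^sub>R A + 0 \<in> U" if "t \<in> {0..h}" for t
    proof -
      have b: "x + v \<in> U" if "norm v < d0" for v
        using d0(2) that unfolding subset_iff mem_ball dist_norm
        by (metis add_diff_cancel_left' norm_minus_commute)
      show "x + t *\<^sub>R A + h *\<^sub>R B \<in> U" "x + t *\<^sub>R A + 0 \<in> U"
        using b[of "t *\<^sub>R A + h *\<^sub>R B"] b[of "t *\<^sub>R A"] inball1[OF that] inball2[OF that]
        by (auto simp: add.assoc)
    qed
    define K where "K = H B"
    define \<psi> where "\<psi> = (\<lambda>t. g (x + t *\<^sub>R A + h *\<^sub>R B) - g (x + t *\<^sub>R A + 0) - (t*h) *\<^sub>R K)"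
    define \<psi>' where "\<psi>' = (\<lambda>t s. Dg (x + t *\<^sub>R A + h *\<^sub>R B) (s *\<^sub>R A) - Dg (x + t *\<^sub>R A + 0) (s *\<^sub>R A) - (s*h) *\<^sub>R K)"
    have der: "(\<psi> has_derivative \<psi>' t) (at t)" if "t \<in> {0..h}" for t
    proof -
      have a: "((\<lambda>t. g (x + t *\<^sub>R A + h *\<^sub>R B)) has_derivative (\<lambda>s. Dg (x + t *\<^sub>R A + h *\<^sub>R B) (s *\<^sub>R A))) (at t)"
        by (rule chain_line, rule Dg, rule inU[OF that])
      have b: "((\<lambda>t. g (x + t *\<^sub>R A + 0)) has_derivative (\<lambda>s. Dg (x + t *\<^sub>R A + 0) (s *\<^sub>R A))) (at t)"
        by (rule chain_line, rule Dg, rule inU[OF that])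
      have c: "((\<lambda>t. (t*h) *\<^sub>R K) has_derivative (\<lambda>s. (s*h) *\<^sub>R K)) (at t)"
        by (auto intro!: derivative_eq_intros)
      show ?thesis unfolding \<psi>_def \<psi>'_def by (rule has_derivative_diff[OF has_derivative_diff[OF a b] c])
    qed
    have cont: "continuous_on {0..h} \<psi>"
      using der by (meson continuous_at_imp_continuous_on has_derivative_continuous)
    obtain t where t: "t \<in> {0<..<h}" "norm (\<psi> h - \<psi> 0) \<le> norm (\<psi>' t (h - 0))"
      using mvt_general[of 0 h \<psi> \<psi>'] h cont der by force
    have t0: "t \<in> {0..h}" using t by auto
    have lin1: "Dg y (s *\<^sub>R A) = s *\<^sub>R Dg y A" if "y \<in> U" for y s
      using Dg[OF that] has_derivative_bounded_linear linear_scale bounded_linear.linear by blast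
    have "\<psi>' t h = h *\<^sub>R (Dg (x + t *\<^sub>R A + h *\<^sub>R B) A - Dg (x + t *\<^sub>R A + 0) A - h *\<^sub>R K)"
      unfolding \<psi>'_def using lin1 inU[OF t0] by (simp add: algebra_simps)
    also have "Dg (x + t *\<^sub>R A + h *\<^sub>R B) A - Dg (x + t *\<^sub>R A + 0) A - h *\<^sub>R K
      = (Dg (x + (t *\<^sub>R A + h *\<^sub>R B)) A - Dg x A - H (t *\<^sub>R A + h *\<^sub>R B))
        - (Dg (x + t *\<^sub>R A) A - Dg x A - H (t *\<^sub>R A))"
    proof -
      have "H (t *\<^sub>R A + h *\<^sub>R B) = H (t *\<^sub>R A) + h *\<^sub>R H B"
        using bl by (simp add: linear_add[OF bounded_linear.linear[OF bl]] linear_scale[OF bounded_linear.linear[OF bl]])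
      thus ?thesis unfolding K_def by (simp add: add.assoc)
    qed
    finally have eq: "\<psi>' t h = h *\<^sub>R ((Dg (x + (t *\<^sub>R A + h *\<^sub>R B)) A - Dg x A - H (t *\<^sub>R A + h *\<^sub>R B))
        - (Dg (x + t *\<^sub>R A) A - Dg x A - H (t *\<^sub>R A)))" .
    have e1: "norm (Dg (x + (t *\<^sub>R A + h *\<^sub>R B)) A - Dg x A - H (t *\<^sub>R A + h *\<^sub>R B)) \<le> (e/C) * norm (t *\<^sub>R A + h *\<^sub>R B)"
      using d1(2)[rule_format, of "x + (t *\<^sub>R A + h *\<^sub>R B)"] inball1[OF t0] by simp
    have e2: "norm (Dg (x + t *\<^sub>R A) A - Dg x A - H (t *\<^sub>R A)) \<le> (e/C) * norm (t *\<^sub>R A)"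
      using d1(2)[rule_format, of "x + t *\<^sub>R A"] inball2[OF t0] by simp
    have n1: "norm (t *\<^sub>R A + h *\<^sub>R B) \<le> h * norm A + h * norm B"
      using norm_triangle_ineq[of "t *\<^sub>R A" "h *\<^sub>R B"] nA[OF t0] nB by linarith
    have "(e/C) * norm (t *\<^sub>R A + h *\<^sub>R B) + (e/C) * norm (t *\<^sub>R A) \<le> (e/C) * (h*C)"
    proof -
      have "(e/C) * norm (t *\<^sub>R A + h *\<^sub>R B) + (e/C) * norm (t *\<^sub>R A) = (e/C) * (norm (t *\<^sub>R A + h *\<^sub>R B) + norm (t *\<^sub>R A))"
        by (simp add: algebra_simps)
      also have "\<dots> \<le> (e/C) * (h * C)"
        apply (rule mult_left_mono)
        using n1 nA[OF t0] e C h by (auto simp: C_def algebra_simps)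
      finally show ?thesis .
    qed
    hence "norm ((Dg (x + (t *\<^sub>R A + h *\<^sub>R B)) A - Dg x A - H (t *\<^sub>R A + h *\<^sub>R B))
        - (Dg (x + t *\<^sub>R A) A - Dg x A - H (t *\<^sub>R A))) \<le> e * h"
    proof -
      have "(e/C) * (h*C) = e * h" using C by simp
      thus ?thesis using e1 e2 norm_triangle_ineq4[of "Dg (x + (t *\<^sub>R A + h *\<^sub>R B)) A - Dg x A - H (t *\<^sub>R A + h *\<^sub>R B)" "Dg (x + t *\<^sub>R A) A - Dg x A - H (t *\<^sub>R A)"]
        \<open>(e/C) * norm (t *\<^sub>R A + h *\<^sub>R B) + (e/C) * norm (t *\<^sub>R A) \<le> (e/C) * (h*C)\<close> by linarith
    qed
    hence "norm (\<psi>' t h) \<le> h * (e * h)" using h by (simp add: eq mult_left_mono)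
    moreover have "\<psi> h - \<psi> 0 = g (x + h *\<^sub>R A + h *\<^sub>R B) - g (x + h *\<^sub>R A) - g (x + h *\<^sub>R B) + g x - (h*h) *\<^sub>R H B"
      by (simp add: \<psi>_def K_def)
    ultimately show "norm (g (x + h *\<^sub>R A + h *\<^sub>R B) - g (x + h *\<^sub>R A) - g (x + h *\<^sub>R B) + g x - (h*h) *\<^sub>R H B) \<le> e * (h*h)"
      using t(2) by (metis (no_types, lifting) diff_zero mult.commute mult.left_commute order_trans)
  qed
qed

lemma second_deriv_symmetric:
  fixes g :: "'a::real_normed_vector \<Rightarrow> 'b::real_inner"
  assumes U: "open U" "x \<in> U"
    and Dg: "\<And>y. y \<in> U \<Longrightarrow> (g has_derivative Dg y) (at y)"
    and H: "\<And>z. ((\<lambda>y. Dg y z) has_derivative H z) (at x)"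
  shows "H A B = H B A"
proof (rule ccontr)
  assume ne: "H A B \<noteq> H B A"
  define e where "e = norm (H A B - H B A) / 4"
  have e: "e > 0" using ne by (simp add: e_def)
  obtain d1 where d1: "d1 > 0" "\<forall>h. 0 < h \<and> h < d1 \<longrightarrow>
     norm (g (x + h *\<^sub>R A + h *\<^sub>R B) - g (x + h *\<^sub>R A) - g (x + h *\<^sub>R B) + g x - (h*h) *\<^sub>R H A B) \<le> e * (h*h)"
    using sym_aux[OF U Dg H e] by blast
  obtain d2 where d2: "d2 > 0" "\<forall>h. 0 < h \<and> h < d2 \<longrightarrow>
     norm (g (x + h *\<^sub>R B + h *\<^sub>R A) - g (x + h *\<^sub>R B) - g (x + h *\<^sub>R A) + g x - (h*h) *\<^sub>R H B A) \<le> e * (h*h)"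
    using sym_aux[OF U Dg H e] by blast
  define h where "h = min d1 d2 / 2"
  have h: "0 < h" "h < d1" "h < d2" using d1 d2 by (auto simp: h_def)
  define \<Delta> where "\<Delta> = g (x + h *\<^sub>R A + h *\<^sub>R B) - g (x + h *\<^sub>R A) - g (x + h *\<^sub>R B) + g x"
  have a1: "norm (\<Delta> - (h*h) *\<^sub>R H A B) \<le> e * (h*h)" using d1(2) h unfolding \<Delta>_def by blast
  have eqD: "g (x + h *\<^sub>R B + h *\<^sub>R A) - g (x + h *\<^sub>R B) - g (x + h *\<^sub>R A) + g x = \<Delta>"
    unfolding \<Delta>_def by (simp add: algebra_simps)
  have a2: "norm (\<Delta> - (h*h) *\<^sub>R H B A) \<le> e * (h*h)" using d2(2) h eqD by metis
  have "norm ((h*h) *\<^sub>R (H A B - H B A)) \<le> 2 * e * (h*h)"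
  proof -
    have q: "(h*h) *\<^sub>R (H A B - H B A) = (\<Delta> - (h*h) *\<^sub>R H B A) - (\<Delta> - (h*h) *\<^sub>R H A B)"
      by (simp add: algebra_simps)
    have "norm ((h*h) *\<^sub>R (H A B - H B A)) \<le> norm (\<Delta> - (h*h) *\<^sub>R H B A) + norm (\<Delta> - (h*h) *\<^sub>R H A B)"
      unfolding q by (rule norm_triangle_ineq4)
    thus ?thesis using a1 a2 by linarith
  qed
  moreover have "norm ((h*h) *\<^sub>R (H A B - H B A)) = (h*h) * norm (H A B - H B A)" by simp
  ultimately have "(h*h) * norm (H A B - H B A) \<le> (h*h) * (2 * e)" by (simp add: algebra_simps)
  hence "norm (H A B - H B A) \<le> 2 * e" using h by (simp add: mult_le_cancel_left_pos)
  thus False using e unfolding e_def by simp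
qed



lemma linear_perturb_bound:
  fixes A B :: "'e::euclidean_space \<Rightarrow> 'f::real_normed_vector"
  assumes "linear A" "linear B"
  shows "norm (A z - B z) \<le> (\<Sum>i\<in>Basis. norm (A i - B i)) * norm z"
proof -
  have lin: "linear (\<lambda>z. A z - B z)" using assms by (simp add: linear_compose_sub)
  have "A z - B z = (\<lambda>z. A z - B z) (\<Sum>i\<in>Basis. (z \<bullet> i) *\<^sub>R i)"
    by (simp add: euclidean_representation)
  also have "\<dots> = (\<Sum>i\<in>Basis. (z \<bullet> i) *\<^sub>R (A i - B i))"
    by (simp only: linear_sum[OF lin] linear_scale[OF lin] o_def)
  finally have "A z - B z = (\<Sum>i\<in>Basis. (z \<bullet> i) *\<^sub>R (A i - B i))" .
  hence "norm (A z - B z) \<le> (\<Sum>i\<in>Basis. norm ((z \<bullet> i) *\<^sub>R (A i - B i)))"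
    by (simp only:) (rule norm_sum)
  also have "\<dots> \<le> (\<Sum>i\<in>Basis. norm z * norm (A i - B i))"
    by (intro sum_mono) (simp add: Basis_le_norm mult_right_mono)
  finally show ?thesis by (simp add: sum_distrib_left mult.commute)
qed

lemma solve_differentiable:
  fixes A :: "'p::real_normed_vector \<Rightarrow> 'e::euclidean_space \<Rightarrow> 'e"
  assumes lin: "\<And>y. linear (A y)"
    and dA: "\<And>z. ((\<lambda>y. A y z) has_derivative A' z) (at x)"
    and db: "(b has_derivative b') (at x)"
    and inj: "inj (A x)"
    and S: "open S" "x \<in> S" "\<And>y. y \<in> S \<Longrightarrow> A y (c y) = b y"
  shows "c differentiable (at x)"
proof -
  obtain g where g: "linear g" "\<And>z. g (A x z) = z" "\<And>z. A x (g z) = z"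
    using linear_injective_isomorphism[OF lin inj] by blast
  obtain Bg where Bg: "Bg > 0" "\<And>z. norm (g z) \<le> Bg * norm z" using linear_bounded_pos[OF g(1)] by blast
  define m where "m = 1 / Bg"
  have m: "m > 0" using Bg by (simp add: m_def)
  have lowA: "m * norm z \<le> norm (A x z)" for z
  proof -
    have "norm z \<le> Bg * norm (A x z)" using Bg(2)[of "A x z"] g(2) by simp
    thus ?thesis using Bg by (simp add: m_def field_simps)
  qed
  define c0 where "c0 = c x"
  have bl_b': "bounded_linear b'" using db has_derivative_bounded_linear by blast
  have bl_A': "bounded_linear (A' z)" for z using dA has_derivative_bounded_linear by blast
  define c' where "c' = (\<lambda>v. g (b' v - A' c0 v))"
  have bl_g: "bounded_linear g" using g(1) by (simp add: linear_linear)
  have lin_c': "bounded_linear c'" unfolding c'_def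
    using bounded_linear_compose[OF bl_g bounded_linear_sub[OF bl_b' bl_A'[of c0]]] by simp
  obtain K where K: "K > 0" "\<And>v. norm (c' v) \<le> K * norm v"
    using bounded_linear.pos_bounded[OF lin_c'] by (metis mult.commute)
  have Axc': "A x (c' v) = b' v - A' c0 v" for v unfolding c'_def by (rule g(3))
  define \<delta> where "\<delta> = (\<lambda>y. \<Sum>i\<in>Basis. norm (A y i - A x i))"
  have \<delta>: "norm (A y z - A x z) \<le> \<delta> y * norm z" for y z
    unfolding \<delta>_def by (rule linear_perturb_bound[OF lin lin])
  have \<delta>lim: "(\<delta> \<longlongrightarrow> 0) (at x)"
  proof -
    have "((\<lambda>y. A y i) \<longlongrightarrow> A x i) (at x)" for i
      using dA[of i] has_derivative_continuous continuous_at by blast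
    hence "((\<lambda>y. A y i - A x i) \<longlongrightarrow> 0) (at x)" for i
      using tendsto_diff[of "\<lambda>y. A y i" "A x i" "at x" "\<lambda>_. A x i" "A x i"] by simp
    hence "((\<lambda>y. norm (A y i - A x i)) \<longlongrightarrow> 0) (at x)" for i
      by (rule tendsto_norm_zero)
    thus ?thesis unfolding \<delta>_def
      using tendsto_sum[of Basis "\<lambda>i y. norm (A y i - A x i)" "\<lambda>i. 0" "at x"] by simp
  qed
  have bx: "b x = A x c0" using S unfolding c0_def by simp
  have key: "A y (c y - c0 - c' (y - x)) = (b y - b x - b' (y - x)) - (A y c0 - A x c0 - A' c0 (y - x))
      - (A y (c' (y - x)) - A x (c' (y - x)))" if "y \<in> S" for y
  proof -
    have "A y (c y - c0 - c' (y - x)) = b y - A y c0 - A y (c' (y - x))"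
      using S(3)[OF that] lin[of y] by (simp add: linear_diff)
    thus ?thesis using bx Axc'[of "y - x"] by (simp add: algebra_simps)
  qed
  define r1 where "r1 = (\<lambda>y. norm (b y - b x - b' (y - x)) / norm (y - x))"
  define r2 where "r2 = (\<lambda>y. norm (A y c0 - A x c0 - A' c0 (y - x)) / norm (y - x))"
  have r1: "(r1 \<longlongrightarrow> 0) (at x)" using db unfolding has_derivative_iff_norm r1_def by simp
  have r2: "(r2 \<longlongrightarrow> 0) (at x)" using dA[of c0] unfolding has_derivative_iff_norm r2_def by simp
  have ev\<delta>: "\<forall>\<^sub>F y in at x. \<delta> y < m/2" using order_tendstoD(2)[OF \<delta>lim, of "m/2"] m by simp
  have evS: "\<forall>\<^sub>F y in at x. y \<in> S" using S(1,2) unfolding eventually_at_topological by blast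
  have evne: "\<forall>\<^sub>F y in at x. y \<noteq> x" by (simp add: eventually_at_filter)
  have bound: "\<forall>\<^sub>F y in at x. norm (norm (c y - c x - c' (y - x)) / norm (y - x))
      \<le> (2/m) * (r1 y + r2 y + \<delta> y * K)"
    using ev\<delta> evS evne
  proof eventually_elim
    case (elim y)
    define w where "w = c y - c0 - c' (y - x)"
    define v where "v = y - x"
    have nv: "norm v > 0" using elim by (simp add: v_def)
    have "norm (A x w) - norm (A y w) \<le> \<delta> y * norm w"
      using \<delta>[of y w] norm_triangle_ineq3[of "A y w" "A x w"] by (simp add: norm_minus_commute)
    hence low: "(m/2) * norm w \<le> norm (A y w)"
      using lowA[of w] elim(1) mult_right_mono[of "\<delta> y" "m/2" "norm w"] by simp
    have "norm (A y w) \<le> norm (b y - b x - b' v) + norm (A y c0 - A x c0 - A' c0 v)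
         + norm (A y (c' v) - A x (c' v))"
    proof -
      have "norm (A y w) = norm ((b y - b x - b' v) - (A y c0 - A x c0 - A' c0 v) - (A y (c' v) - A x (c' v)))"
        unfolding w_def v_def key[OF elim(2)] ..
      also have "\<dots> \<le> norm ((b y - b x - b' v) - (A y c0 - A x c0 - A' c0 v)) + norm (A y (c' v) - A x (c' v))"
        by (rule norm_triangle_ineq4)
      also have "norm ((b y - b x - b' v) - (A y c0 - A x c0 - A' c0 v)) \<le> norm (b y - b x - b' v) + norm (A y c0 - A x c0 - A' c0 v)"
        by (rule norm_triangle_ineq4)
      finally show ?thesis by simp
    qed
    also have "norm (A y (c' v) - A x (c' v)) \<le> \<delta> y * (K * norm v)"
    proof -
      have "\<delta> y \<ge> 0" unfolding \<delta>_def by (intro sum_nonneg) auto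
      hence "\<delta> y * norm (c' v) \<le> \<delta> y * (K * norm v)" using K(2)[of v] by (simp add: mult_left_mono)
      thus ?thesis using \<delta>[of y "c' v"] by linarith
    qed
    finally have "(m/2) * norm w \<le> (r1 y + r2 y + \<delta> y * K) * norm v"
      using low nv unfolding r1_def r2_def v_def by (simp add: algebra_simps)
    hence "norm w / norm v \<le> (2/m) * (r1 y + r2 y + \<delta> y * K)"
      using nv m by (simp add: field_simps)
    thus ?case by (simp add: w_def v_def c0_def)
  qed
  have "((\<lambda>y. (2/m) * (r1 y + r2 y + \<delta> y * K)) \<longlongrightarrow> (2/m) * (0 + 0 + 0 * K)) (at x)"
    by (intro tendsto_intros r1 r2 \<delta>lim)
  hence lim: "((\<lambda>y. norm (c y - c x - c' (y - x)) / norm (y - x)) \<longlongrightarrow> 0) (at x)"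
    using Lim_null_comparison[OF bound] by simp
  have "(c has_derivative c') (at x)"
    unfolding has_derivative_iff_norm using lin_c' lim by simp
  thus ?thesis by (auto simp: differentiable_def)
qed



context
  fixes f :: "complex^'n \<Rightarrow> complex^'m" and U :: "(complex^'n) set"
  assumes oU: "open U" and hol: "cx_holomorphic f U" and imm: "cx_immersion f U"
    and d2: "\<forall>Y. (\<lambda>y. frechet_derivative f (at y) Y) differentiable_on U"
begin

abbreviation "Ld y \<equiv> frechet_derivative f (at y)"
abbreviation "D2 x Z \<equiv> frechet_derivative (\<lambda>y. Ld y Z) (at x)"

lemma Lder: "y \<in> U \<Longrightarrow> (f has_derivative Ld y) (at y)"
  using imm unfolding cx_immersion_def by (simp add: frechet_derivative_works)

lemma Lbl: "y \<in> U \<Longrightarrow> bounded_linear (Ld y)"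
  using Lder has_derivative_bounded_linear by blast

lemma Llin: "y \<in> U \<Longrightarrow> linear (Ld y)"
  using Lbl bounded_linear.linear by blast

lemma Lcx: "y \<in> U \<Longrightarrow> Ld y (c *s v) = c *s Ld y v"
proof -
  assume y: "y \<in> U"
  obtain L where L: "(f has_derivative L) (at y)" "\<forall>c v. L (c *s v) = c *s L v"
    using hol y unfolding cx_holomorphic_def by blast
  have "L = Ld y" using L(1) by (rule frechet_derivative_at)
  thus ?thesis using L(2) by simp
qed

lemma Linj: "y \<in> U \<Longrightarrow> inj (Ld y)"
  using imm unfolding cx_immersion_def by simp

lemma D2der: "x \<in> U \<Longrightarrow> ((\<lambda>y. Ld y Z) has_derivative D2 x Z) (at x)"
  using d2 oU by (simp add: differentiable_on_eq_differentiable_at frechet_derivative_works)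

lemma D2bl: "x \<in> U \<Longrightarrow> bounded_linear (D2 x Z)"
  using D2der has_derivative_bounded_linear by blast

lemma D2sym: "x \<in> U \<Longrightarrow> D2 x A B = D2 x B A"
  by (rule second_deriv_symmetric[where g=f and U=U and Dg=Ld and H="D2 x"])
     (use oU Lder D2der in auto)

lemma D2i: "x \<in> U \<Longrightarrow> D2 x (\<i> *s Z) X = \<i> *s D2 x Z X"
proof -
  assume x: "x \<in> U"
  have a: "((\<lambda>y. \<i> *s Ld y Z) has_derivative (\<lambda>X. \<i> *s D2 x Z X)) (at x)"
    using bounded_linear.has_derivative[OF bounded_linear_i D2der[OF x]] by simp
  have b: "((\<lambda>y. Ld y (\<i> *s Z)) has_derivative (\<lambda>X. \<i> *s D2 x Z X)) (at x)"
    by (rule has_derivative_transform_within_open[OF a oU x]) (simp add: Lcx)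
  show ?thesis using fun_cong[OF frechet_derivative_at[OF b], of X] by simp
qed

lemma D2i2: "x \<in> U \<Longrightarrow> D2 x Z (\<i> *s X) = \<i> *s D2 x Z X"
  by (metis D2sym D2i)

lemma D2lin: "x \<in> U \<Longrightarrow> linear (\<lambda>Z. D2 x Z X)"
  using D2sym D2bl bounded_linear.linear by (metis (no_types, lifting) ext)

lemma Tsub: "y \<in> U \<Longrightarrow> subspace (range (Ld y))"
proof -
  assume y: "y \<in> U"
  note l = Llin[OF y]
  show ?thesis unfolding subspace_def
  proof (intro conjI ballI allI)
    show "0 \<in> range (Ld y)" using linear_0[OF l] by (metis rangeI)
    fix a b assume "a \<in> range (Ld y)" "b \<in> range (Ld y)"
    then obtain p q where "a = Ld y p" "b = Ld y q" by blast
    thus "a + b \<in> range (Ld y)" using linear_add[OF l, of p q] by (metis rangeI)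
  next
    fix c a assume "a \<in> range (Ld y)"
    then obtain p where "a = Ld y p" by blast
    thus "c *\<^sub>R a \<in> range (Ld y)" using linear_scale[OF l, of c p] by (metis rangeI)
  qed
qed

lemma tangent_space_eq: "tangent_space f y = range (Ld y)"
  by (simp add: tangent_space_def)

lemma T_i: "y \<in> U \<Longrightarrow> v \<in> range (Ld y) \<Longrightarrow> \<i> *s v \<in> range (Ld y)"
  by (auto simp: Lcx[symmetric])

lemma N_i: "y \<in> U \<Longrightarrow> (\<forall>t\<in>range (Ld y). inner w t = 0) \<Longrightarrow> (\<forall>t\<in>range (Ld y). inner (\<i> *s w) t = 0)"
  by (auto simp: inner_i_left Lcx[symmetric])

lemma tan_works: "y \<in> U \<Longrightarrow> tan_part f y w \<in> range (Ld y) \<and> (\<forall>t\<in>range (Ld y). inner (w - tan_part f y w) t = 0)"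
  unfolding tan_part_def tangent_space_eq by (rule orth_proj_works[OF Tsub])

lemma nor_eq: "nor_part f y w = w - tan_part f y w"
  by (simp add: nor_part_def)

lemma nor_normal: "y \<in> U \<Longrightarrow> t \<in> range (Ld y) \<Longrightarrow> inner (nor_part f y w) t = 0"
  using tan_works nor_eq by auto

lemma tan_unique: "y \<in> U \<Longrightarrow> v \<in> range (Ld y) \<Longrightarrow> \<forall>t\<in>range (Ld y). inner (w - v) t = 0 \<Longrightarrow> tan_part f y w = v"
  unfolding tan_part_def tangent_space_eq by (rule orth_proj_unique[OF Tsub])

lemma tan_i: "y \<in> U \<Longrightarrow> tan_part f y (\<i> *s w) = \<i> *s tan_part f y w"
proof -
  assume y: "y \<in> U"
  have "\<forall>t\<in>range (Ld y). inner (\<i> *s (w - tan_part f y w)) t = 0"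
    using N_i[OF y] tan_works[OF y] by blast
  thus ?thesis using tan_unique[OF y] T_i[OF y] tan_works[OF y] by (simp add: i_diff)
qed

lemma nor_i: "y \<in> U \<Longrightarrow> nor_part f y (\<i> *s w) = \<i> *s nor_part f y w"
  by (simp add: nor_eq tan_i i_diff)

lemma tan_of_tan: "y \<in> U \<Longrightarrow> v \<in> range (Ld y) \<Longrightarrow> tan_part f y v = v"
  by (rule tan_unique) auto

lemma nor_add: "y \<in> U \<Longrightarrow> nor_part f y (v + w) = nor_part f y v + nor_part f y w"
proof -
  assume y: "y \<in> U"
  have "tan_part f y (v + w) = tan_part f y v + tan_part f y w"
  proof (rule tan_unique[OF y])
    show "tan_part f y v + tan_part f y w \<in> range (Ld y)"
      using tan_works[OF y] Tsub[OF y] subspace_add by blast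
    show "\<forall>t\<in>range (Ld y). inner (v + w - (tan_part f y v + tan_part f y w)) t = 0"
      using tan_works[OF y, of v] tan_works[OF y, of w]
      by (simp add: inner_diff_left inner_add_left algebra_simps)
  qed
  thus ?thesis by (simp add: nor_eq)
qed

lemma nor_of_tan: "y \<in> U \<Longrightarrow> v \<in> range (Ld y) \<Longrightarrow> nor_part f y v = 0"
  by (simp add: nor_eq tan_of_tan)

lemma tangent_zero: "y \<in> U \<Longrightarrow> v \<in> range (Ld y) \<Longrightarrow> (\<And>Z. inner v (Ld y Z) = 0) \<Longrightarrow> v = 0"
  by (metis inner_eq_zero_iff rangeE)

definition "cc y = (SOME c. Ld y c = fT f y)"

lemma fT_range: "y \<in> U \<Longrightarrow> fT f y \<in> range (Ld y)"
  using tan_works unfolding fT_def by blast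

lemma cc: "y \<in> U \<Longrightarrow> Ld y (cc y) = fT f y"
  unfolding cc_def using fT_range by (metis (mono_tags, lifting) rangeE someI_ex)

lemma fN_eq: "fN f y = f y - Ld y (cc y)" if "y \<in> U"
  using cc[OF that] by (simp add: fN_def fT_def nor_eq)

lemma fN_normal: "y \<in> U \<Longrightarrow> inner (fN f y) (Ld y Z) = 0"
  unfolding fN_def using nor_normal by blast

definition "Am y z = (if y \<in> U then (\<Sum>b\<in>Basis. inner (Ld y z) (Ld y b) *\<^sub>R b) else z)"
definition "bm y = (\<Sum>b\<in>Basis. inner (f y) (Ld y b) *\<^sub>R b)"

lemma Am_lin: "linear (Am y)"
proof (cases "y \<in> U")
  case True
  note l = Llin[OF True]
  show ?thesis unfolding Am_def using True
    by (intro linearI) (simp_all add: linear_add[OF l] linear_scale[OF l] inner_add_left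
        scaleR_add_left sum.distrib scaleR_right.sum scaleR_scaleR)
next
  case False thus ?thesis unfolding Am_def by (simp add: linear_id[unfolded id_def])
qed

lemma Am_sol: "y \<in> U \<Longrightarrow> Am y (cc y) = bm y"
proof -
  assume y: "y \<in> U"
  have "inner (Ld y (cc y)) (Ld y b) = inner (f y) (Ld y b)" for b
    using fN_normal[OF y, of b] fN_eq[OF y] by (simp add: inner_diff_left)
  thus ?thesis unfolding Am_def bm_def using y by simp
qed

lemma Am_inj: "x \<in> U \<Longrightarrow> inj (Am x)"
proof -
  assume x: "x \<in> U"
  note l = Llin[OF x]
  have "z = 0" if "Am x z = 0" for z
  proof -
    have "inner z (Am x z) = (\<Sum>b\<in>Basis. inner (Ld x z) (Ld x b) * inner z b)"
      using x by (simp add: Am_def inner_sum_right)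
    also have "\<dots> = inner (Ld x z) (\<Sum>b\<in>Basis. inner z b *\<^sub>R Ld x b)"
      by (simp add: inner_sum_right mult.commute)
    also have "(\<Sum>b\<in>Basis. inner z b *\<^sub>R Ld x b) = Ld x (\<Sum>b\<in>Basis. inner z b *\<^sub>R b)"
      by (simp add: linear_sum[OF l] linear_scale[OF l] o_def)
    also have "\<dots> = Ld x z" by (simp add: euclidean_representation)
    finally have "inner (Ld x z) (Ld x z) = 0" using that by simp
    hence "Ld x z = 0" by simp
    thus "z = 0" using Linj[OF x] linear_0[OF l] by (metis injD)
  qed
  thus ?thesis using linear_injective_0[OF Am_lin] by blast
qed

lemma Am_der: "x \<in> U \<Longrightarrow> ((\<lambda>y. Am y z) has_derivative frechet_derivative (\<lambda>y. \<Sum>b\<in>Basis. inner (Ld y z) (Ld y b) *\<^sub>R b) (at x)) (at x)"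
proof -
  assume x: "x \<in> U"
  have "(\<lambda>y. \<Sum>b\<in>Basis. inner (Ld y z) (Ld y b) *\<^sub>R b) differentiable (at x)"
  proof (rule differentiable_sum[OF finite_Basis], intro ballI)
    fix b
    have "(\<lambda>y. inner (Ld y z) (Ld y b)) differentiable (at x)"
      using D2der[OF x] by (intro differentiable_inner) (auto simp: differentiable_def)
    thus "(\<lambda>y. inner (Ld y z) (Ld y b) *\<^sub>R b) differentiable (at x)"
      by (intro differentiable_scaleR) auto
  qed
  hence d: "((\<lambda>y. \<Sum>b\<in>Basis. inner (Ld y z) (Ld y b) *\<^sub>R b) has_derivative frechet_derivative (\<lambda>y. \<Sum>b\<in>Basis. inner (Ld y z) (Ld y b) *\<^sub>R b) (at x)) (at x)"
    by (rule frechet_derivative_works[THEN iffD1])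
  show ?thesis by (rule has_derivative_transform_within_open[OF d oU x]) (simp add: Am_def)
qed

lemma bm_der: "x \<in> U \<Longrightarrow> (bm has_derivative frechet_derivative bm (at x)) (at x)"
proof -
  assume x: "x \<in> U"
  have "bm differentiable (at x)" unfolding bm_def
  proof (rule differentiable_sum[OF finite_Basis], intro ballI)
    fix b
    have "(\<lambda>y. inner (f y) (Ld y b)) differentiable (at x)"
      using D2der[OF x] Lder[OF x] by (intro differentiable_inner) (auto simp: differentiable_def)
    thus "(\<lambda>y. inner (f y) (Ld y b) *\<^sub>R b) differentiable (at x)"
      by (intro differentiable_scaleR) auto
  qed
  thus ?thesis by (rule frechet_derivative_works[THEN iffD1])
qed

lemma cc_diff: "x \<in> U \<Longrightarrow> cc differentiable (at x)"
  by (rule solve_differentiable[where A=Am and b=bm and S=U, OF Am_lin Am_der bm_der Am_inj oU])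
     (auto simp: Am_sol)


definition "Nd x X = Ld x X - Ld x (frechet_derivative cc (at x) X) - D2 x (cc x) X"

lemma Lcc_der: "x \<in> U \<Longrightarrow> ((\<lambda>y. Ld y (cc y)) has_derivative
    (\<lambda>X. Ld x (frechet_derivative cc (at x) X) + D2 x (cc x) X)) (at x)"
proof -
  assume x: "x \<in> U"
  define c' where "c' = frechet_derivative cc (at x)"
  have dc: "(cc has_derivative c') (at x)" unfolding c'_def
    using cc_diff[OF x] frechet_derivative_works by blast
  have h: "((\<lambda>y. \<Sum>b\<in>Basis. inner (cc y) b *\<^sub>R Ld y b) has_derivative
      (\<lambda>X. \<Sum>b\<in>Basis. inner (cc x) b *\<^sub>R D2 x b X + inner (c' X) b *\<^sub>R Ld x b)) (at x)"
    by (intro has_derivative_sum has_derivative_scaleR has_derivative_inner_left dc D2der[OF x])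
  have eq1: "(\<Sum>b\<in>Basis. inner z b *\<^sub>R g b) = g z" if "linear g" for g :: "complex^'n \<Rightarrow> complex^'m" and z
  proof -
    have "g z = g (\<Sum>b\<in>Basis. inner z b *\<^sub>R b)" by (simp add: euclidean_representation)
    also have "\<dots> = (\<Sum>b\<in>Basis. inner z b *\<^sub>R g b)"
      by (simp add: linear_sum[OF that] linear_scale[OF that] o_def)
    finally show ?thesis by simp
  qed
  have "(\<lambda>X. \<Sum>b\<in>Basis. inner (cc x) b *\<^sub>R D2 x b X + inner (c' X) b *\<^sub>R Ld x b)
      = (\<lambda>X. Ld x (c' X) + D2 x (cc x) X)"
  proof
    fix X
    show "(\<Sum>b\<in>Basis. inner (cc x) b *\<^sub>R D2 x b X + inner (c' X) b *\<^sub>R Ld x b) = Ld x (c' X) + D2 x (cc x) X"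
      using eq1[OF D2lin[OF x, of X], of "cc x"] eq1[OF Llin[OF x], of "c' X"]
      by (simp add: sum.distrib add.commute)
  qed
  with h have h2: "((\<lambda>y. \<Sum>b\<in>Basis. inner (cc y) b *\<^sub>R Ld y b) has_derivative
      (\<lambda>X. Ld x (c' X) + D2 x (cc x) X)) (at x)" by simp
  show ?thesis unfolding c'_def[symmetric]
    by (rule has_derivative_transform_within_open[OF h2 oU x]) (simp add: eq1[OF Llin])
qed

lemma fN_der: "x \<in> U \<Longrightarrow> (fN f has_derivative Nd x) (at x)"
proof -
  assume x: "x \<in> U"
  have "((\<lambda>y. f y - Ld y (cc y)) has_derivative (\<lambda>X. Ld x X - (Ld x (frechet_derivative cc (at x) X) + D2 x (cc x) X))) (at x)"
    by (rule has_derivative_diff[OF Lder[OF x] Lcc_der[OF x]])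
  hence "((\<lambda>y. f y - Ld y (cc y)) has_derivative Nd x) (at x)"
    unfolding Nd_def by (simp add: algebra_simps)
  thus ?thesis by (rule has_derivative_transform_within_open[OF _ oU x]) (simp add: fN_eq)
qed

lemma Nd_tan: "x \<in> U \<Longrightarrow> inner (Nd x X) (Ld x Z) = - inner (fN f x) (D2 x Z X)"
proof -
  assume x: "x \<in> U"
  have a: "((\<lambda>y. inner (fN f y) (Ld y Z)) has_derivative
      (\<lambda>X. inner (fN f x) (D2 x Z X) + inner (Nd x X) (Ld x Z))) (at x)"
    by (rule has_derivative_inner[OF fN_der[OF x] D2der[OF x]])
  have b: "((\<lambda>y. inner (fN f y) (Ld y Z)) has_derivative (\<lambda>X. 0)) (at x)"
    by (rule has_derivative_transform_within_open[OF has_derivative_const oU x]) (simp add: fN_normal)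
  have "(\<lambda>X. inner (fN f x) (D2 x Z X) + inner (Nd x X) (Ld x Z)) = (\<lambda>X. 0)"
    using has_derivative_unique[OF a b] .
  hence "inner (fN f x) (D2 x Z X) + inner (Nd x X) (Ld x Z) = 0" by (metis (no_types))
  thus ?thesis by simp
qed

lemma nor_neg: "y \<in> U \<Longrightarrow> nor_part f y (- w) = - nor_part f y w"
proof -
  assume y: "y \<in> U"
  have "nor_part f y (w + - w) = 0" using nor_of_tan[OF y, of 0] Tsub[OF y] subspace_0 by auto
  thus ?thesis using nor_add[OF y, of w "- w"] by (simp add: eq_neg_iff_add_eq_0 add.commute)
qed

lemma Nd_nor: "x \<in> U \<Longrightarrow> nor_part f x (Nd x X) = - nor_part f x (D2 x (cc x) X)"
proof -
  assume x: "x \<in> U"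
  have "Nd x X = Ld x (X - frechet_derivative cc (at x) X) + - D2 x (cc x) X"
    unfolding Nd_def using linear_diff[OF Llin[OF x]] by simp
  hence "nor_part f x (Nd x X) = nor_part f x (Ld x (X - frechet_derivative cc (at x) X)) + nor_part f x (- D2 x (cc x) X)"
    using nor_add[OF x] by metis
  thus ?thesis using nor_of_tan[OF x, of "Ld x (X - frechet_derivative cc (at x) X)"] nor_neg[OF x] by simp
qed


lemma proj2: "u \<noteq> 0 \<Longrightarrow> orth_proj (span {u, \<i> *s u}) w =
    (inner w u / inner u u) *\<^sub>R u + (inner w (\<i> *s u) / inner u u) *\<^sub>R (\<i> *s u)"
proof -
  assume u: "u \<noteq> 0"
  define r where "r = inner u u"
  have r: "r \<noteq> 0" using u by (simp add: r_def)
  define cand where "cand = (inner w u / r) *\<^sub>R u + (inner w (\<i> *s u) / r) *\<^sub>R (\<i> *s u)"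
  have iu: "inner (\<i> *s u) u = 0" "inner u (\<i> *s u) = 0" "inner (\<i> *s u) (\<i> *s u) = r"
    using inner_i_self[of u] by (simp_all add: inner_commute inner_i_i r_def)
  have o1: "inner (w - cand) u = 0" unfolding cand_def using r iu
    by (simp add: inner_diff_left inner_add_left r_def[symmetric])
  have o2: "inner (w - cand) (\<i> *s u) = 0" unfolding cand_def using r iu
    by (simp add: inner_diff_left inner_add_left)
  have "cand \<in> span {u, \<i> *s u}" unfolding cand_def
    by (intro span_add span_scale span_base) auto
  moreover have "\<forall>v\<in>span {u, \<i> *s u}. inner (w - cand) v = 0"
  proof
    fix v assume "v \<in> span {u, \<i> *s u}"
    hence "orthogonal (w - cand) v"
      by (rule orthogonal_to_span) (use o1 o2 in \<open>auto simp: orthogonal_def\<close>)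
    thus "inner (w - cand) v = 0" by (simp add: orthogonal_def)
  qed
  ultimately have "orth_proj (span {u, \<i> *s u}) w = cand"
    by (intro orth_proj_unique) auto
  thus ?thesis by (simp add: cand_def r_def)
qed

definition "Fd x X = (1 / inner (fN f x) (fN f x)) *\<^sub>R Nd x X
   - (2 * inner (fN f x) (Nd x X) / (inner (fN f x) (fN f x))^2) *\<^sub>R fN f x"

lemma FN_der: "x \<in> U \<Longrightarrow> fN f x \<noteq> 0 \<Longrightarrow> (FN f has_derivative Fd x) (at x)"
proof -
  assume x: "x \<in> U" and u0: "fN f x \<noteq> 0"
  define u where "u = fN f x"
  define r where "r = inner u u"
  have r: "r > 0" using u0 by (simp add: r_def u_def)
  have q1: "((\<lambda>y. inner (fN f y) (fN f y)) has_derivative (\<lambda>h. inner u (Nd x h) + inner (Nd x h) u)) (at x)"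
    unfolding u_def by (rule has_derivative_inner[OF fN_der[OF x] fN_der[OF x]])
  have q2: "((\<lambda>y. inverse (inner (fN f y) (fN f y))) has_derivative
      (\<lambda>h. - (inverse r * (inner u (Nd x h) + inner (Nd x h) u) * inverse r))) (at x)"
    using diff_chain_at[OF q1 has_derivative_inverse'[of "inner (fN f x) (fN f x)" UNIV]] u0
    by (simp add: o_def r_def u_def)
  have q3: "((\<lambda>y. inverse (inner (fN f y) (fN f y)) *\<^sub>R fN f y) has_derivative
      (\<lambda>h. inverse (inner (fN f x) (fN f x)) *\<^sub>R Nd x h + (- (inverse r * (inner u (Nd x h) + inner (Nd x h) u) * inverse r)) *\<^sub>R fN f x)) (at x)"
    by (rule has_derivative_scaleR[OF q2 fN_der[OF x]])
  have e1: "(\<lambda>h. inverse (inner (fN f x) (fN f x)) *\<^sub>R Nd x h + (- (inverse r * (inner u (Nd x h) + inner (Nd x h) u) * inverse r)) *\<^sub>R fN f x)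
     = Fd x"
  proof
    fix h
    have "- (inverse r * (inner u (Nd x h) + inner (Nd x h) u) * inverse r) = - (2 * inner u (Nd x h) / r^2)"
      using r by (simp add: inner_commute power2_eq_square field_simps)
    thus "inverse (inner (fN f x) (fN f x)) *\<^sub>R Nd x h + (- (inverse r * (inner u (Nd x h) + inner (Nd x h) u) * inverse r)) *\<^sub>R fN f x = Fd x h"
      unfolding Fd_def u_def[symmetric] r_def[symmetric] by (simp add: divide_inverse)
  qed
  have e2: "FN f = (\<lambda>y. inverse (inner (fN f y) (fN f y)) *\<^sub>R fN f y)"
    by (simp add: FN_def fun_eq_iff power2_norm_eq_inner divide_inverse)
  show ?thesis using q3 unfolding e1 e2 .
qed


lemma main_id: "x \<in> U \<Longrightarrow> fN f x \<noteq> 0 \<Longrightarrow>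
  Fd x (\<i> *s X) + \<i> *s Fd x X = (- (2 / inner (fN f x) (fN f x))) *\<^sub>R (\<i> *s sff_perp f x X (cc x))"
proof -
  assume x: "x \<in> U" and u0: "fN f x \<noteq> 0"
  define u where "u = fN f x"
  define r where "r = inner u u"
  have r: "r > 0" using u0 by (simp add: r_def u_def)
  define n where "n = nor_part f x (D2 x (cc x) X)"
  define N1 where "N1 = Nd x X"
  define N2 where "N2 = Nd x (\<i> *s X)"
  define t1 where "t1 = tan_part f x N1"
  define t2 where "t2 = tan_part f x N2"
  have nN1: "nor_part f x N1 = - n" unfolding N1_def n_def by (rule Nd_nor[OF x])
  have nN2: "nor_part f x N2 = - (\<i> *s n)" unfolding N2_def n_def
    using Nd_nor[OF x, of "\<i> *s X"] D2i2[OF x] nor_i[OF x] by simp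
  have "N1 = t1 + nor_part f x N1" by (simp add: t1_def nor_eq)
  hence N1: "N1 = t1 - n" using nN1 by simp
  have "N2 = t2 + nor_part f x N2" by (simp add: t2_def nor_eq)
  hence N2: "N2 = t2 - \<i> *s n" using nN2 by simp
  have t1r: "t1 \<in> range (Ld x)" and t2r: "t2 \<in> range (Ld x)"
    using tan_works[OF x] unfolding t1_def t2_def by blast+
  have tanin: "inner (tan_part f x N) (Ld x Z) = inner N (Ld x Z)" for N Z
    using nor_normal[OF x, of "Ld x Z" N] by (simp add: nor_eq inner_diff_left)
  have "t2 + \<i> *s t1 = 0"
  proof (rule tangent_zero[OF x])
    show "t2 + \<i> *s t1 \<in> range (Ld x)"
      using t2r T_i[OF x t1r] Tsub[OF x] subspace_add by blast
    fix Z
    have a: "inner t2 (Ld x Z) = - inner u (\<i> *s D2 x Z X)"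
      unfolding t2_def tanin N2_def u_def by (simp add: Nd_tan[OF x] D2i2[OF x])
    have b: "inner (\<i> *s t1) (Ld x Z) = inner u (\<i> *s D2 x Z X)"
      unfolding inner_i_left Lcx[OF x, symmetric] t1_def tanin N1_def u_def
      by (simp add: Nd_tan[OF x] D2i[OF x])
    show "inner (t2 + \<i> *s t1) (Ld x Z) = 0" using a b by (simp add: inner_add_left)
  qed
  hence t2: "t2 = - (\<i> *s t1)" by (simp add: eq_neg_iff_add_eq_0)
  have ut1: "inner u t1 = 0" using t1r fN_normal[OF x] unfolding u_def by auto
  have uit1: "inner u (\<i> *s t1) = 0" using T_i[OF x t1r] fN_normal[OF x] unfolding u_def by auto
  have uin: "inner u (\<i> *s n) = - inner n (\<i> *s u)"
    using inner_i_left[of n u] by (simp add: inner_commute)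
  have iu: "\<i> *s (\<i> *s u) = - u" by (rule i_i)
  have sp: "sff_perp f x X (cc x) = n - ((inner n u / r) *\<^sub>R u + (inner n (\<i> *s u) / r) *\<^sub>R (\<i> *s u))"
    unfolding sff_perp_def sff_def n_def[symmetric] u_def[symmetric] r_def using proj2[OF u0] by (simp add: u_def)
  have lhs: "Fd x (\<i> *s X) + \<i> *s Fd x X =
      (1/r) *\<^sub>R (N2 + \<i> *s N1) - (2 * inner u N2 / r^2) *\<^sub>R u - (2 * inner u N1 / r^2) *\<^sub>R (\<i> *s u)"
    unfolding Fd_def u_def[symmetric] r_def[symmetric] N1_def[symmetric] N2_def[symmetric]
    by (simp add: i_add i_diff i_scaleR algebra_simps)
  also have "N2 + \<i> *s N1 = (- 2) *\<^sub>R (\<i> *s n)"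
    unfolding N1 N2 t2 by (simp add: i_diff algebra_simps scaleR_2)
  also have "inner u N2 = inner n (\<i> *s u)" unfolding N2 t2
    by (simp add: inner_diff_right uit1 uin)
  also have "inner u N1 = - inner u n" unfolding N1 by (simp add: inner_diff_right ut1)
  finally have L: "Fd x (\<i> *s X) + \<i> *s Fd x X = (1/r) *\<^sub>R ((- 2) *\<^sub>R (\<i> *s n))
     - (2 * inner n (\<i> *s u) / r^2) *\<^sub>R u - (2 * - inner u n / r^2) *\<^sub>R (\<i> *s u)" .
  have R: "(- (2 / r)) *\<^sub>R (\<i> *s sff_perp f x X (cc x)) =
     (- (2 / r)) *\<^sub>R (\<i> *s n) - (- (2 / r) * (inner n u / r)) *\<^sub>R (\<i> *s u)
     + (- (2 / r) * (inner n (\<i> *s u) / r)) *\<^sub>R u"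
    unfolding sp by (simp add: i_diff i_add i_scaleR iu algebra_simps)
  show ?thesis unfolding u_def[symmetric] r_def[symmetric] L R
    using r by (simp add: power2_eq_square inner_commute algebra_simps)
qed


lemma anti_at_iff: "x \<in> U \<Longrightarrow> fN f x \<noteq> 0 \<Longrightarrow>
   (\<exists>L. (FN f has_derivative L) (at x) \<and> (\<forall>v. L (\<i> *s v) = - (\<i> *s L v)))
   \<longleftrightarrow> (\<forall>X. sff_perp f x X (cc x) = 0)"
proof -
  assume x: "x \<in> U" and u0: "fN f x \<noteq> 0"
  have r: "inner (fN f x) (fN f x) > 0" using u0 by simp
  have "(\<exists>L. (FN f has_derivative L) (at x) \<and> (\<forall>v. L (\<i> *s v) = - (\<i> *s L v)))
     \<longleftrightarrow> (\<forall>v. Fd x (\<i> *s v) = - (\<i> *s Fd x v))"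
    using FN_der[OF x u0] has_derivative_unique by metis
  also have "\<dots> \<longleftrightarrow> (\<forall>v. Fd x (\<i> *s v) + \<i> *s Fd x v = 0)"
    by (simp add: eq_neg_iff_add_eq_0)
  also have "\<dots> \<longleftrightarrow> (\<forall>X. sff_perp f x X (cc x) = 0)"
    using r by (simp add: main_id[OF x u0] i_eq_0)
  finally show ?thesis .
qed

lemma Y_iff: "x \<in> U \<Longrightarrow> Ld x Y = fT f x \<longleftrightarrow> Y = cc x"
  using cc Linj by (metis injD)

lemma p1_case: "x \<in> U \<Longrightarrow> fN f x \<noteq> 0 \<Longrightarrow> CARD('m) = CARD('n) + 1 \<Longrightarrow> sff_perp f x X Y = 0"
proof -
  assume x: "x \<in> U" and u0: "fN f x \<noteq> 0" and card: "CARD('m) = CARD('n) + 1"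
  define u where "u = fN f x"
  define Nsp where "Nsp = {y. \<forall>t \<in> range (Ld x). orthogonal t y}"
  have subN: "subspace Nsp" unfolding Nsp_def by (rule subspace_orthogonal_to_vectors)
  have "dim {y \<in> UNIV. \<forall>t \<in> range (Ld x). orthogonal t y} + dim (range (Ld x)) = dim (UNIV :: (complex^'m) set)"
    by (rule dim_subspace_orthogonal_to_vectors) (auto simp: Tsub[OF x])
  moreover have "dim (range (Ld x)) = dim (UNIV :: (complex^'n) set)"
    using dim_image_eq[OF Llin[OF x]] Linj[OF x] by (simp add: inj_on_def inj_def)
  ultimately have dN: "dim Nsp = 2" unfolding Nsp_def using card by simp
  have uN: "u \<in> Nsp" and iuN: "\<i> *s u \<in> Nsp"
    using fN_normal[OF x] N_i[OF x, of u] unfolding Nsp_def u_def orthogonal_def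
    by (auto simp: inner_commute)
  have spsub: "span {u, \<i> *s u} \<subseteq> Nsp"
    using uN iuN subN by (simp add: span_minimal)
  have ne: "u \<noteq> \<i> *s u"
  proof
    assume "u = \<i> *s u"
    hence "inner u u = 0" using inner_i_self[of u] by simp
    thus False using u0 u_def by simp
  qed
  have ind: "independent {u, \<i> *s u}"
    by (rule pairwise_orthogonal_independent)
       (use u0 ne inner_i_self[of u] in \<open>auto simp: pairwise_def orthogonal_def u_def inner_commute i_eq_0\<close>)
  have "dim (span {u, \<i> *s u}) = 2"
    using dim_eq_card_independent[OF ind] ne by simp
  hence eqN: "span {u, \<i> *s u} = Nsp"
    using subspace_dim_equal[OF subspace_span subN spsub] dN by simp
  define n where "n = sff f x X Y"
  have "n \<in> Nsp" unfolding n_def sff_def Nsp_def orthogonal_def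
    using nor_normal[OF x] by (simp add: inner_commute)
  hence "orth_proj (span {u, \<i> *s u}) n = n" unfolding eqN[symmetric]
    by (intro orth_proj_unique) auto
  thus ?thesis unfolding sff_perp_def n_def[symmetric] u_def by simp
qed

end

theorem mainTheorem10:
  fixes f :: "complex^'n \<Rightarrow> complex^'m" and U :: "(complex^'n) set"
  assumes "open U"
    and "cx_holomorphic f U"
    and "cx_immersion f U"
    and "\<forall>Y. (\<lambda>y. frechet_derivative f (at y) Y) differentiable_on U"
  defines "W \<equiv> {x \<in> U. fN f x \<noteq> 0}"
  shows "(cx_antiholomorphic (FN f) W \<longleftrightarrow>
           (\<forall>x\<in>W. \<forall>X Y. frechet_derivative f (at x) Y = fT f x \<longrightarrow> sff_perp f x X Y = 0))
         \<and> (CARD('m) = CARD('n) + 1 \<longrightarrow> cx_antiholomorphic (FN f) W)"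
proof -
  note A = assms(1-4)
  have e1: "cx_antiholomorphic (FN f) W \<longleftrightarrow> (\<forall>x\<in>W. \<forall>X. sff_perp f x X (cc f x) = 0)"
    unfolding cx_antiholomorphic_def W_def using anti_at_iff[OF A] by auto
  have e2: "(\<forall>x\<in>W. \<forall>X Y. frechet_derivative f (at x) Y = fT f x \<longrightarrow> sff_perp f x X Y = 0)
      \<longleftrightarrow> (\<forall>x\<in>W. \<forall>X. sff_perp f x X (cc f x) = 0)"
    unfolding W_def using Y_iff[OF A] by auto
  have e3: "CARD('m) = CARD('n) + 1 \<longrightarrow> (\<forall>x\<in>W. \<forall>X. sff_perp f x X (cc f x) = 0)"
    unfolding W_def using p1_case[OF A] by auto
  show ?thesis using e1 e2 e3 by blast
qed


end
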